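(* Let $E$ be a reflexive real Banach space with norm $\|\cdot\|$, let $X$ be a real Banach space with $E\hookrightarrow X$ compactly, and let $I\in C^1(E,\mathbb{R})$ be of the form $I=J-N$, where $N\in C^1(E,\mathbb{R})$ and $J$ is $2$-homogeneous, i.e. $J(\tau u)=\tau^2J(u)$ for all $\tau\in\mathbb{R}$, $u\in E$. Assume: (H1) there exist $t\in(0,1)$ and a function $\psi:E\to[0,\infty)$, homogeneous of degree one, with $\|u\|_X\le\psi(u)^{1-t}\|u\|^t$ for all $u\in E$; (H2) there exist $a,c,\mu>0$ with $|\langle N'(u),u\rangle-2N(u)|\ge a\psi(u)^\mu-c$ for all $u\in E$; (H3) there is $k>0$ with $J(u)\ge k\|u\|^2$ for all $u\in E$; (H4) there exist $b,d>0$ and $q>2$ with $|N(u)|\le b\|u\|_X^q+d$ for all $u\in E$; and suppose $qt<2$. Then $I$ satisfies condition $(\hat C)_c$ for every $c\in\mathbb{R}$.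
   Context: $I$ satisfies $(\hat C)_c$ if every sequence $(u_n)\subset E$ with $I(u_n)\to c$ and $(1+\|u_n\|)\,\|I'(u_n)\|_{E^*}\to0$ has a bounded subsequence. *)

theory Defs
  imports "HOL-Analysis.Analysis"
begin

definition reflexive_space :: "'a::real_normed_vector itself \<Rightarrow> bool" where
  "reflexive_space _ \<longleftrightarrow>
     (\<forall>\<phi> :: ('a \<Rightarrow>\<^sub>L real) \<Rightarrow>\<^sub>L real. \<exists>x::'a. \<forall>f. blinfun_apply \<phi> f = blinfun_apply f x)"

definition compact_embedding :: "('a::real_normed_vector \<Rightarrow> 'b::real_normed_vector) \<Rightarrow> bool" where
  "compact_embedding i \<longleftrightarrow> bounded_linear i \<and> inj i \<and>
     (\<forall>B. bounded B \<longrightarrow> compact (closure (i ` B)))"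

definition C1_with_deriv :: "('a::real_normed_vector \<Rightarrow> real) \<Rightarrow> ('a \<Rightarrow> ('a \<Rightarrow>\<^sub>L real)) \<Rightarrow> bool" where
  "C1_with_deriv F D \<longleftrightarrow> (\<forall>u. (F has_derivative blinfun_apply (D u)) (at u)) \<and> continuous_on UNIV D"

definition Chat_condition :: "('a::real_normed_vector \<Rightarrow> real) \<Rightarrow> ('a \<Rightarrow> ('a \<Rightarrow>\<^sub>L real)) \<Rightarrow> real \<Rightarrow> bool" where
  "Chat_condition I I' c \<longleftrightarrow>
     (\<forall>u. (\<lambda>n. I (u n)) \<longlonglongrightarrow> c \<and>
        (\<lambda>n. (1 + norm (u n)) * norm (I' (u n))) \<longlonglongrightarrow> 0 \<longrightarrow>
        (\<exists>r :: nat \<Rightarrow> nat. strict_mono r \<and> bounded (range (u \<circ> r))))"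

end

theory Submission
  imports Defs
begin

lemma poly_bound:
  fixes k C D p x :: real
  assumes k: "k > 0" and C: "C \<ge> 0" and D: "D \<ge> 0" and p: "0 < p" "p < 2" and x: "x \<ge> 0"
    and h: "k * x\<^sup>2 \<le> C + D * x powr p"
  shows "x \<le> max 1 (((C + D) / k) powr (1 / (2 - p)))"
proof (rule ccontr)
  assume "\<not> ?thesis"
  hence x1: "x > 1" and xb: "x > ((C + D) / k) powr (1 / (2 - p))" by auto
  have "C \<le> C * x powr p" using C x1 p
    by (metis ge_one_powr_ge_zero less_eq_real_def mult_le_cancel_left1 not_le)
  hence "k * x\<^sup>2 \<le> (C + D) * x powr p" using h by (simp add: distrib_right)
  moreover have "x\<^sup>2 = x powr (2 - p) * x powr p" using x1
    by (simp add: powr_add[symmetric] powr_numeral)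
  ultimately have "k * x powr (2 - p) * x powr p \<le> (C + D) * x powr p" by (simp add: mult.assoc)
  hence "k * x powr (2 - p) \<le> C + D" using x1 by simp
  hence le: "x powr (2 - p) \<le> (C + D) / k" using k by (simp add: field_simps)
  have "x = (x powr (2 - p)) powr (1 / (2 - p))" using x1 p
    by (simp add: powr_powr)
  also have "\<dots> \<le> ((C + D) / k) powr (1 / (2 - p))"
    using le p x1 by (intro powr_mono2) auto
  finally show False using xb by simp
qed

theorem theorem2p2:
  fixes i :: "'a::banach \<Rightarrow> 'b::banach"
    and I J N :: "'a \<Rightarrow> real"
    and I' N' :: "'a \<Rightarrow> ('a \<Rightarrow>\<^sub>L real)"
    and \<psi> :: "'a \<Rightarrow> real"
    and t a c0 \<mu> k b d q :: real
  assumes refl: "reflexive_space TYPE('a)"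
    and emb: "compact_embedding i"
    and I_C1: "C1_with_deriv I I'"
    and N_C1: "C1_with_deriv N N'"
    and I_eq: "\<And>u. I u = J u - N u"
    and J_hom: "\<And>\<tau> u. J (\<tau> *\<^sub>R u) = \<tau>\<^sup>2 * J u"
    and t: "0 < t" "t < 1"
    and psi_nonneg: "\<And>u. \<psi> u \<ge> 0"
    and psi_hom: "\<And>\<tau> u. \<tau> > 0 \<Longrightarrow> \<psi> (\<tau> *\<^sub>R u) = \<tau> * \<psi> u"
    and H1: "\<And>u. norm (i u) \<le> \<psi> u powr (1 - t) * norm u powr t"
    and H2_pos: "a > 0" "c0 > 0" "\<mu> > 0"
    and H2: "\<And>u. \<bar>N' u u - 2 * N u\<bar> \<ge> a * \<psi> u powr \<mu> - c0"
    and H3_pos: "k > 0"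
    and H3: "\<And>u. J u \<ge> k * (norm u)\<^sup>2"
    and H4_pos: "b > 0" "d > 0" "q > 2"
    and H4: "\<And>u. \<bar>N u\<bar> \<le> b * norm (i u) powr q + d"
    and qt: "q * t < 2"
  shows "\<forall>c. Chat_condition I I' c"
proof -
  have euler: "N' u u - 2 * N u = 2 * I u - I' u u" for u
  proof -
    have dI: "(I has_derivative blinfun_apply (I' u)) (at u)" using I_C1 unfolding C1_with_deriv_def by blast
    have dN: "(N has_derivative blinfun_apply (N' u)) (at u)" using N_C1 unfolding C1_with_deriv_def by blast
    have Jeq: "J = (\<lambda>x. I x + N x)" using I_eq by (auto simp: fun_eq_iff)
    have dJ: "(J has_derivative (\<lambda>h. I' u h + N' u h)) (at u)"
      unfolding Jeq by (rule has_derivative_add[OF dI dN])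
    have dg: "((\<lambda>\<tau>::real. \<tau> *\<^sub>R u) has_derivative (\<lambda>h. h *\<^sub>R u)) (at 1)"
      by (auto intro!: derivative_eq_intros)
    have dJ': "(J has_derivative (\<lambda>h. I' u h + N' u h)) (at ((\<lambda>\<tau>::real. \<tau> *\<^sub>R u) 1))"
      using dJ by simp
    have c1: "((\<lambda>\<tau>::real. J (\<tau> *\<^sub>R u)) has_derivative (\<lambda>h. I' u (h *\<^sub>R u) + N' u (h *\<^sub>R u))) (at 1)"
      using has_derivative_compose[OF dg dJ'] by simp
    have c2: "((\<lambda>\<tau>::real. J (\<tau> *\<^sub>R u)) has_derivative (\<lambda>h. h * (2 * J u))) (at 1)"
      unfolding J_hom by (auto intro!: derivative_eq_intros)
    have "(\<lambda>h. I' u (h *\<^sub>R u) + N' u (h *\<^sub>R u)) = (\<lambda>h. h * (2 * J u))"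
      using has_derivative_unique[OF c1 c2] .
    from fun_cong[OF this, of 1] have "I' u u + N' u u = 2 * J u" by simp
    thus ?thesis using I_eq[of u] by simp
  qed
  show ?thesis unfolding Chat_condition_def
  proof (intro allI impI)
    fix c and u :: "nat \<Rightarrow> 'a"
    assume "(\<lambda>n. I (u n)) \<longlonglongrightarrow> c \<and> (\<lambda>n. (1 + norm (u n)) * norm (I' (u n))) \<longlonglongrightarrow> 0"
    then have l1: "(\<lambda>n. I (u n)) \<longlonglongrightarrow> c" and l2: "(\<lambda>n. (1 + norm (u n)) * norm (I' (u n))) \<longlonglongrightarrow> 0" by auto
    obtain A where A: "\<And>n. norm (I (u n)) \<le> A" using convergent_imp_Bseq[OF convergentI[OF l1]]
      unfolding Bseq_def by blast
    obtain B where B: "\<And>n. norm ((1 + norm (u n)) * norm (I' (u n))) \<le> B"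
      using convergent_imp_Bseq[OF convergentI[OF l2]] unfolding Bseq_def by blast
    have A0: "A \<ge> 0" using A[of 0] by simp
    have B0: "B \<ge> 0" using B[of 0] by (meson norm_ge_zero order_trans)
    define M where "M = ((B + 2 * A + c0) / a) powr (1 / \<mu>)"
    have M0: "M \<ge> 0" unfolding M_def by simp
    have psiM: "\<psi> (u n) \<le> M" for n
    proof -
      have "\<bar>I' (u n) (u n)\<bar> \<le> norm (I' (u n)) * norm (u n)"
        using norm_blinfun[of "I' (u n)" "u n"] by simp
      also have "\<dots> \<le> (1 + norm (u n)) * norm (I' (u n))"
        by (simp add: algebra_simps)
      also have "\<dots> \<le> B" using B[of n] by simp
      finally have "\<bar>I' (u n) (u n)\<bar> \<le> B" .
      hence "\<bar>N' (u n) (u n) - 2 * N (u n)\<bar> \<le> B + 2 * A"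
        using euler[of "u n"] A[of n] by simp
      hence "a * \<psi> (u n) powr \<mu> \<le> B + 2 * A + c0" using H2[of "u n"] by simp
      hence le: "\<psi> (u n) powr \<mu> \<le> (B + 2 * A + c0) / a" using H2_pos by (simp add: field_simps)
      have "\<psi> (u n) = (\<psi> (u n) powr \<mu>) powr (1 / \<mu>)"
        using H2_pos psi_nonneg[of "u n"] by (simp add: powr_powr)
      also have "\<dots> \<le> M" unfolding M_def
        using le H2_pos by (intro powr_mono2) auto
      finally show ?thesis .
    qed
    define K where "K = (M powr (1 - t)) powr q"
    define R where "R = max 1 (((A + d + b * K) / k) powr (1 / (2 - q * t)))"
    have "norm (u n) \<le> R" for n
    proof -
      have iu: "norm (i (u n)) \<le> M powr (1 - t) * norm (u n) powr t"
        using H1[of "u n"] psiM[of n] psi_nonneg[of "u n"] t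
        by (meson mult_right_mono order_trans powr_ge_zero powr_mono2 less_imp_le diff_ge_0_iff_ge)
      have "norm (i (u n)) powr q \<le> (M powr (1 - t) * norm (u n) powr t) powr q"
        using iu H4_pos by (intro powr_mono2) auto
      also have "\<dots> = K * norm (u n) powr (q * t)"
        unfolding K_def by (simp add: powr_mult powr_powr mult.commute)
      finally have iq: "norm (i (u n)) powr q \<le> K * norm (u n) powr (q * t)" .
      have "k * (norm (u n))\<^sup>2 \<le> J (u n)" using H3 by blast
      also have "\<dots> = I (u n) + N (u n)" using I_eq[of "u n"] by simp
      also have "\<dots> \<le> A + (b * norm (i (u n)) powr q + d)"
        using A[of n] H4[of "u n"] by (intro add_mono) auto
      also have "\<dots> \<le> A + (b * (K * norm (u n) powr (q * t)) + d)"
        using iq H4_pos by (intro add_mono mult_left_mono) auto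
      finally have h: "k * (norm (u n))\<^sup>2 \<le> (A + d) + (b * K) * norm (u n) powr (q * t)"
        by (simp add: algebra_simps)
      have K0: "K \<ge> 0" unfolding K_def by simp
      show ?thesis unfolding R_def
        using poly_bound[OF H3_pos _ _ _ qt _ h] A0 H4_pos K0 t
        by (simp add: add.assoc)
    qed
    hence bd: "bounded (range (u \<circ> (id::nat\<Rightarrow>nat)))" unfolding bounded_iff by auto
    have sm: "strict_mono (id::nat\<Rightarrow>nat)" by (simp add: strict_mono_def)
    show "\<exists>r::nat\<Rightarrow>nat. strict_mono r \<and> bounded (range (u \<circ> r))"
      using bd sm by blast
  qed
qed

end
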